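(* Let $\mathcal{G}=(V,\mathcal{E})$ be a strongly connected digraph with $n$ nodes and let $\tau\in\mathbb{Z}_{>0}$ be an attack duration that is nontrivial for $\mathcal{G}$, i.e. $\tau\ge D$, where $D$ is the diameter of $\mathcal{G}$, and $\tau$ is strictly smaller than the length of every closed walk in $\mathcal{G}$ that starts and ends at the same vertex and visits every vertex at least once. Then the value of the game satisfies $\mathbb{V}\le \frac{\tau}{n}$.
   Context: A Markov chain strategy conforming to $\mathcal{G}$ is a matrix $P=(p_{ij})\in\mathbb{R}^{n\times n}$ with $P\mathbb{1}_n=\mathbb{1}_n$, $p_{ij}\ge 0$ for $(i,j)\in\mathcal{E}$ and $p_{ij}=0$ for $(i,j)\notin\mathcal{E}$. For a Markov chain $(X_k)_{k\ge0}$ with transition matrix $P$, the first hitting time from $i$ to $j$ is $T_{ij}=\min\{k\ge 1: X_k=j\}$ given $X_0=i$ (so $T_{ii}$ is the first return time). The value of the game is $\mathbb{V}=\max_{P}\min_{i,j\in V}\mathbb{P}(T_{ij}(P)\le\tau)$, the maximum taken over all Markov chain strategies $P$ conforming to $\mathcal{G}$. *)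

theory Defs
  imports Complex_Main
begin

definition is_walk :: "nat \<Rightarrow> (nat \<times> nat) set \<Rightarrow> nat list \<Rightarrow> bool" where
  "is_walk n E xs \<longleftrightarrow> xs \<noteq> [] \<and> set xs \<subseteq> {..<n} \<and>
     (\<forall>k. Suc k < length xs \<longrightarrow> (xs ! k, xs ! Suc k) \<in> E)"

definition walk_len :: "nat list \<Rightarrow> nat" where
  "walk_len xs = length xs - 1"

definition strongly_connected :: "nat \<Rightarrow> (nat \<times> nat) set \<Rightarrow> bool" where
  "strongly_connected n E \<longleftrightarrow>
     (\<forall>i<n. \<forall>j<n. \<exists>xs. is_walk n E xs \<and> hd xs = i \<and> last xs = j)"

definition gdist :: "nat \<Rightarrow> (nat \<times> nat) set \<Rightarrow> nat \<Rightarrow> nat \<Rightarrow> nat" where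
  "gdist n E i j = (LEAST k. \<exists>xs. is_walk n E xs \<and> hd xs = i \<and> last xs = j \<and> walk_len xs = k)"

definition diameter :: "nat \<Rightarrow> (nat \<times> nat) set \<Rightarrow> nat" where
  "diameter n E = Max {gdist n E i j | i j. i < n \<and> j < n}"

definition covering_closed_walk :: "nat \<Rightarrow> (nat \<times> nat) set \<Rightarrow> nat list \<Rightarrow> bool" where
  "covering_closed_walk n E xs \<longleftrightarrow> is_walk n E xs \<and> hd xs = last xs \<and> {..<n} \<subseteq> set xs"

text \<open>Markov chain strategy conforming to the graph; matrices are functions
nat => nat => real, with all entries outside {..<n}x{..<n} equal to zero.\<close>
definition conforming_strategy :: "nat \<Rightarrow> (nat \<times> nat) set \<Rightarrow> (nat \<Rightarrow> nat \<Rightarrow> real) \<Rightarrow> bool" where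
  "conforming_strategy n E P \<longleftrightarrow>
     (\<forall>i<n. (\<Sum>j<n. P i j) = 1) \<and>
     (\<forall>i j. (i, j) \<in> E \<and> i < n \<and> j < n \<longrightarrow> P i j \<ge> 0) \<and>
     (\<forall>i j. \<not> ((i, j) \<in> E \<and> i < n \<and> j < n) \<longrightarrow> P i j = 0)"

text \<open>first_hit P n i j k = P(T_ij = k) for the chain started at i,
where T_ij = min {k >= 1. X_k = j}.\<close>
fun first_hit :: "(nat \<Rightarrow> nat \<Rightarrow> real) \<Rightarrow> nat \<Rightarrow> nat \<Rightarrow> nat \<Rightarrow> nat \<Rightarrow> real" where
  "first_hit P n i j 0 = 0"
| "first_hit P n i j (Suc 0) = P i j"
| "first_hit P n i j (Suc (Suc k)) = (\<Sum>h\<in>{..<n} - {j}. P i h * first_hit P n h j (Suc k))"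

definition hit_within :: "(nat \<Rightarrow> nat \<Rightarrow> real) \<Rightarrow> nat \<Rightarrow> nat \<Rightarrow> nat \<Rightarrow> nat \<Rightarrow> real" where
  "hit_within P n i j \<tau> = (\<Sum>k\<in>{1..\<tau>}. first_hit P n i j k)"

definition game_value :: "nat \<Rightarrow> (nat \<times> nat) set \<Rightarrow> nat \<Rightarrow> real" where
  "game_value n E \<tau> = (SUP P \<in> {P. conforming_strategy n E P}.
      Min {hit_within P n i j \<tau> | i j. i < n \<and> j < n})"

end

theory Submission
  imports Defs
begin

lemma first_hit_nonneg:
  assumes "\<forall>a b. P a b \<ge> 0"
  shows "first_hit P n i j k \<ge> 0"
  using assms
proof (induction P n i j k rule: first_hit.induct)
  case (3 P n i j k)
  then show ?case by (simp, intro sum_nonneg mult_nonneg_nonneg) auto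
qed simp_all

lemma hit_within_nonneg:
  assumes "\<forall>a b. P a b \<ge> 0"
  shows "hit_within P n i j t \<ge> 0"
  unfolding hit_within_def using first_hit_nonneg[OF assms] by (auto intro!: sum_nonneg)

lemma hit_Suc:
  "hit_within P n i j (Suc t) = P i j + (\<Sum>h\<in>{..<n}-{j}. P i h * hit_within P n h j t)"
proof -
  have "hit_within P n i j (Suc t) = first_hit P n i j 1 + (\<Sum>k\<in>{Suc 1..Suc t}. first_hit P n i j k)"
    unfolding hit_within_def by (simp add: sum.atLeast_Suc_atMost)
  also have "(\<Sum>k\<in>{Suc 1..Suc t}. first_hit P n i j k) = (\<Sum>k\<in>{1..t}. first_hit P n i j (Suc k))"
    by (rule sum.shift_bounds_cl_Suc_ivl)
  also have "\<dots> = (\<Sum>k\<in>{1..t}. \<Sum>h\<in>{..<n}-{j}. P i h * first_hit P n h j k)"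
  proof (rule sum.cong)
    fix k assume "k \<in> {1..t}"
    then obtain k' where "k = Suc k'" by (cases k) auto
    then show "first_hit P n i j (Suc k) = (\<Sum>h\<in>{..<n}-{j}. P i h * first_hit P n h j k)" by simp
  qed simp
  also have "\<dots> = (\<Sum>h\<in>{..<n}-{j}. P i h * hit_within P n h j t)"
    unfolding hit_within_def by (subst sum.swap) (simp add: sum_distrib_left)
  finally show ?thesis by simp
qed

lemma sum_hit_le:
  assumes nn: "\<forall>a b. P a b \<ge> 0" and rows: "\<forall>i<n. (\<Sum>j<n. P i j) = 1"
  shows "i < n \<Longrightarrow> (\<Sum>j<n. hit_within P n i j t) \<le> real t"
proof (induction t arbitrary: i)
  case 0
  then show ?case by (simp add: hit_within_def)
next
  case (Suc t)
  have "(\<Sum>j<n. hit_within P n i j (Suc t)) =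
     (\<Sum>j<n. P i j) + (\<Sum>j<n. \<Sum>h\<in>{..<n}-{j}. P i h * hit_within P n h j t)"
    by (simp add: hit_Suc sum.distrib)
  also have "\<dots> \<le> 1 + (\<Sum>j<n. \<Sum>h<n. P i h * hit_within P n h j t)"
  proof -
    have "(\<Sum>h\<in>{..<n}-{j}. P i h * hit_within P n h j t) \<le> (\<Sum>h<n. P i h * hit_within P n h j t)" for j
      by (rule sum_mono2) (auto intro!: mult_nonneg_nonneg hit_within_nonneg nn[rule_format] simp: nn)
    then show ?thesis using rows Suc.prems by (simp add: sum_mono)
  qed
  also have "(\<Sum>j<n. \<Sum>h<n. P i h * hit_within P n h j t) = (\<Sum>h<n. P i h * (\<Sum>j<n. hit_within P n h j t))"
    by (subst sum.swap) (simp add: sum_distrib_left)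
  also have "\<dots> \<le> (\<Sum>h<n. P i h * real t)"
    by (rule sum_mono) (auto intro!: mult_left_mono Suc.IH simp: nn)
  also have "\<dots> = real t"
    using rows Suc.prems by (simp add: sum_distrib_right[symmetric])
  finally show ?case by simp
qed

theorem theorem1:
  fixes n :: nat and E :: "(nat \<times> nat) set" and \<tau> :: nat
  assumes "0 < n"
    and "E \<subseteq> {..<n} \<times> {..<n}"
    and "strongly_connected n E"
    and "0 < \<tau>"
    and "diameter n E \<le> \<tau>"
    and "\<forall>xs. covering_closed_walk n E xs \<longrightarrow> \<tau> < walk_len xs"
  shows "game_value n E \<tau> \<le> real \<tau> / real n"
proof -
  have n2: "n \<ge> 2"
  proof (rule ccontr)
    assume "\<not> n \<ge> 2"
    with assms(1) have "n = 1" by simp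
    then have "covering_closed_walk n E [0]"
      unfolding covering_closed_walk_def is_walk_def by (simp add: lessThan_Suc)
    with assms(6) have "\<tau> < walk_len [0::nat]" by blast
    then show False by (simp add: walk_len_def)
  qed
  have out: "E `` {i} \<noteq> {}" if ilt: "i < n" for i
  proof -
    define j where "j = (if i = 0 then 1 else (0::nat))"
    have "j < n" using n2 unfolding j_def by simp
    have "j \<noteq> i" unfolding j_def by simp
    have "\<exists>xs. is_walk n E xs \<and> hd xs = i \<and> last xs = j"
      using assms(3) ilt \<open>j < n\<close> unfolding strongly_connected_def by simp
    then obtain xs where xs: "is_walk n E xs" "hd xs = i" "last xs = j"
      by blast
    have "length xs \<ge> 2"
    proof (rule ccontr)
      assume "\<not> length xs \<ge> 2"
      moreover have "xs \<noteq> []" using xs by (simp add: is_walk_def)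
      then have "length xs > 0" by simp
      ultimately have "length xs = 1" by arith
      then have "hd xs = last xs" by (auto simp: length_Suc_conv)
      then show False using xs \<open>j \<noteq> i\<close> by simp
    qed
    moreover have "\<forall>k. Suc k < length xs \<longrightarrow> (xs ! k, xs ! Suc k) \<in> E"
      using xs(1) unfolding is_walk_def by blast
    ultimately have "(xs ! 0, xs ! Suc 0) \<in> E" by simp
    moreover have "xs ! 0 = i" using xs(2) \<open>length xs \<ge> 2\<close> by (metis hd_conv_nth list.size(3) not_numeral_le_zero)
    ultimately have "(i, xs ! Suc 0) \<in> E" by simp
    then show ?thesis by blast
  qed
  define P0 where "P0 = (\<lambda>i j. if (i, j) \<in> E then 1 / real (card (E `` {i})) else 0)"
  have "conforming_strategy n E P0"
    unfolding conforming_strategy_def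
  proof (intro conjI allI impI)
    fix i assume i: "i < n"
    have sub: "E `` {i} \<subseteq> {..<n}" using assms(2) by auto
    have fin: "finite (E `` {i})" using sub finite_subset by blast
    have "(\<Sum>j<n. P0 i j) = (\<Sum>j\<in>E `` {i}. 1 / real (card (E `` {i})))"
    proof (rule sum.mono_neutral_cong_right)
      show "finite {..<n}" by simp
      show "E `` {i} \<subseteq> {..<n}" by (rule sub)
      show "\<forall>x\<in>{..<n} - E `` {i}. P0 i x = 0" unfolding P0_def by auto
      show "P0 i x = 1 / real (card (E `` {i}))" if "x \<in> E `` {i}" for x
        using that unfolding P0_def by simp
    qed
    also have "\<dots> = 1" using out[OF i] fin by simp
    finally show "(\<Sum>j<n. P0 i j) = 1" .
  next
    fix i j show "(i, j) \<in> E \<and> i < n \<and> j < n \<Longrightarrow> 0 \<le> P0 i j" by (simp add: P0_def)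
  next
    fix i j show "\<not> ((i, j) \<in> E \<and> i < n \<and> j < n) \<Longrightarrow> P0 i j = 0"
      using assms(2) by (auto simp: P0_def)
  qed
  then have ne: "{P. conforming_strategy n E P} \<noteq> {}" by blast
  show ?thesis
    unfolding game_value_def
  proof (rule cSUP_least[OF ne])
    fix P assume "P \<in> {P. conforming_strategy n E P}"
    then have cs: "conforming_strategy n E P" by simp
    have nn: "\<forall>a b. P a b \<ge> 0"
    proof (intro allI)
      fix a b show "P a b \<ge> 0" using cs unfolding conforming_strategy_def
        by (cases "(a, b) \<in> E \<and> a < n \<and> b < n") auto
    qed
    have rows: "\<forall>i<n. (\<Sum>j<n. P i j) = 1" using cs by (simp add: conforming_strategy_def)
    have sumle: "(\<Sum>j<n. hit_within P n 0 j \<tau>) \<le> real \<tau>"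
      using sum_hit_le[OF nn rows] assms(1) by blast
    obtain j where j: "j < n" "hit_within P n 0 j \<tau> \<le> real \<tau> / real n"
    proof (rule ccontr)
      assume "\<not> thesis"
      have gt: "\<forall>j<n. hit_within P n 0 j \<tau> > real \<tau> / real n"
      proof (intro allI impI)
        fix j assume "j < n"
        show "hit_within P n 0 j \<tau> > real \<tau> / real n"
        proof (rule ccontr)
          assume "\<not> hit_within P n 0 j \<tau> > real \<tau> / real n"
          then have "hit_within P n 0 j \<tau> \<le> real \<tau> / real n" by simp
          with that \<open>j < n\<close> \<open>\<not> thesis\<close> show False by blast
        qed
      qed
      have "(\<Sum>j<n. real \<tau> / real n) < (\<Sum>j<n. hit_within P n 0 j \<tau>)"
      proof (rule sum_strict_mono)
        show "finite {..<n}" by simp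
        show "{..<n} \<noteq> {}" using assms(1) by auto
        show "real \<tau> / real n < hit_within P n 0 x \<tau>" if "x \<in> {..<n}" for x
          using gt that by simp
      qed
      also note sumle
      finally show False using assms(1) by simp
    qed
    have fin: "finite {hit_within P n i j \<tau> | i j. i < n \<and> j < n}"
    proof -
      have "{hit_within P n i j \<tau> | i j. i < n \<and> j < n} = (\<lambda>(i,j). hit_within P n i j \<tau>) ` ({..<n} \<times> {..<n})"
        by auto
      then show ?thesis by simp
    qed
    have "Min {hit_within P n i j \<tau> | i j. i < n \<and> j < n} \<le> hit_within P n 0 j \<tau>"
      apply (rule Min_le[OF fin])
      apply (rule CollectI, rule exI[of _ 0], rule exI[of _ j])
      using j(1) assms(1) apply simp
      done
    with j show "Min {hit_within P n i j \<tau> | i j. i < n \<and> j < n} \<le> real \<tau> / real n" by simp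
  qed
qed

end
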